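(* Let $n\ge 6$ and let $CTG_n$ be the set of chemical tricyclic graphs on $n$ vertices. Define the following subsets of $CTG_n$ (in each, all $m_{i,j}$ not listed are $0$): for $j=0,1,\dots,5$, $\gamma_{9+j}$ is the set of $G\in CTG_n$ with $n_4=0,n_3=4,n_2=n-4,n_1=0$, $m_{2,3}=2+2j$, $m_{3,3}=5-j$, $m_{2,2}=n-5-j$; and $\gamma_{65}$ is the set of $G\in CTG_n$ with $n_4=0,n_3=5,n_2=n-6,n_1=1$, $m_{1,2}=1$, $m_{2,3}=1$, $m_{3,3}=7$, $m_{2,2}=n-7$. Let $G_1\in\gamma_9$, $G_2\in\gamma_{10}$, $G_3\in\gamma_{11}$, $G_4\in\gamma_{12}$, $G_5\in\gamma_{13}$, $G_6\in\gamma_{14}$, $G_7\in\gamma_{65}$, and let $G\in CTG_n$ not belong to $\gamma_9\cup\cdots\cup\gamma_{14}\cup\gamma_{65}$. Then $SO(G_1)<SO(G_2)<SO(G_3)<SO(G_4)<SO(G_5)<SO(G_6)<SO(G_7)<SO(G)$.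
   Context: All graphs are simple and connected. A chemical graph is a graph with maximum degree at most $4$; a tricyclic graph is a connected graph with $n$ vertices and $n+2$ edges. $d_G(u)$ is the degree of $u$, $n_i$ the number of vertices of degree $i$, and $m_{i,j}$ the number of edges joining a vertex of degree $i$ to a vertex of degree $j$. The Sombor index is $SO(G)=\sum_{uv\in E(G)}\sqrt{d_G(u)^2+d_G(v)^2}$. *)

theory Defs
  imports Complex_Main
begin

type_synonym 'a graph = "'a set \<times> 'a set set"

definition verts :: "'a graph \<Rightarrow> 'a set" where "verts G = fst G"
definition edges :: "'a graph \<Rightarrow> 'a set set" where "edges G = snd G"

definition simple_graph :: "'a graph \<Rightarrow> bool" where
  "simple_graph G \<longleftrightarrow> finite (verts G) \<and>
     (\<forall>e\<in>edges G. \<exists>u v. e = {u, v} \<and> u \<noteq> v \<and> u \<in> verts G \<and> v \<in> verts G)"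

definition adj :: "'a graph \<Rightarrow> 'a \<Rightarrow> 'a \<Rightarrow> bool" where
  "adj G u v \<longleftrightarrow> {u, v} \<in> edges G \<and> u \<noteq> v"

definition connected_graph :: "'a graph \<Rightarrow> bool" where
  "connected_graph G \<longleftrightarrow> verts G \<noteq> {} \<and>
     (\<forall>u\<in>verts G. \<forall>v\<in>verts G. (adj G)\<^sup>*\<^sup>* u v)"

definition deg :: "'a graph \<Rightarrow> 'a \<Rightarrow> nat" where
  "deg G v = card {e \<in> edges G. v \<in> e}"

definition CTG :: "nat \<Rightarrow> 'a graph \<Rightarrow> bool" where
  "CTG n G \<longleftrightarrow> simple_graph G \<and> connected_graph G \<and> card (verts G) = n \<and>
     card (edges G) = n + 2 \<and> (\<forall>v\<in>verts G. deg G v \<le> 4)"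

definition nv :: "'a graph \<Rightarrow> nat \<Rightarrow> nat" where
  "nv G i = card {v \<in> verts G. deg G v = i}"

definition me :: "'a graph \<Rightarrow> nat \<Rightarrow> nat \<Rightarrow> nat" where
  "me G i j = card {e \<in> edges G. \<exists>u v. e = {u, v} \<and> u \<noteq> v \<and> deg G u = i \<and> deg G v = j}"

definition SO :: "'a graph \<Rightarrow> real" where
  "SO G = (\<Sum>e\<in>edges G. sqrt (\<Sum>v\<in>e. (real (deg G v))^2))"

definition edge_profile :: "'a graph \<Rightarrow> (nat \<Rightarrow> nat \<Rightarrow> int) \<Rightarrow> bool" where
  "edge_profile G f \<longleftrightarrow> (\<forall>i j. 1 \<le> i \<longrightarrow> i \<le> j \<longrightarrow> j \<le> 4 \<longrightarrow> int (me G i j) = f i j)"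

text \<open>gamma_{9+k}, k = 0..5.\<close>
definition gamma_k :: "nat \<Rightarrow> nat \<Rightarrow> 'a graph \<Rightarrow> bool" where
  "gamma_k n k G \<longleftrightarrow> CTG n G \<and> nv G 4 = 0 \<and> nv G 3 = 4 \<and> int (nv G 2) = int n - 4 \<and> nv G 1 = 0 \<and>
     edge_profile G (\<lambda>i j. if (i, j) = (2, 3) then 2 + 2 * int k
                           else if (i, j) = (3, 3) then 5 - int k
                           else if (i, j) = (2, 2) then int n - 5 - int k
                           else 0)"

definition gamma65 :: "nat \<Rightarrow> 'a graph \<Rightarrow> bool" where
  "gamma65 n G \<longleftrightarrow> CTG n G \<and> nv G 4 = 0 \<and> nv G 3 = 5 \<and> int (nv G 2) = int n - 6 \<and> nv G 1 = 1 \<and>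
     edge_profile G (\<lambda>i j. if (i, j) = (1, 2) then 1
                           else if (i, j) = (2, 3) then 1
                           else if (i, j) = (3, 3) then 7
                           else if (i, j) = (2, 2) then int n - 7
                           else 0)"

end

theory Submission
  imports Defs
begin


definition PP :: "(nat \<times> nat) set" where
  "PP = {(1,1),(1,2),(1,3),(1,4),(2,2),(2,3),(2,4),(3,3),(3,4),(4,4)}"

lemma PP_iff: "(i,j) \<in> PP \<longleftrightarrow> 1 \<le> i \<and> i \<le> j \<and> j \<le> (4::nat)"
proof
  assume "(i,j) \<in> PP" thus "1 \<le> i \<and> i \<le> j \<and> j \<le> (4::nat)" by (auto simp: PP_def)
next
  assume a: "1 \<le> i \<and> i \<le> j \<and> j \<le> (4::nat)"
  hence "i = 1 \<or> i = 2 \<or> i = 3 \<or> i = 4" "j = 1 \<or> j = 2 \<or> j = 3 \<or> j = 4" by arith+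
  then show "(i,j) \<in> PP" using a unfolding PP_def by (elim disjE) simp_all
qed

lemma finite_PP: "finite PP" by (simp add: PP_def)

lemma sg_edge: "simple_graph G \<Longrightarrow> e \<in> edges G \<Longrightarrow> \<exists>u v. e = {u,v} \<and> u \<noteq> v \<and> u \<in> verts G \<and> v \<in> verts G"
  by (auto simp: simple_graph_def)

lemma finite_edges: assumes "simple_graph G" shows "finite (edges G)"
proof -
  have "edges G \<subseteq> Pow (verts G)" using sg_edge[OF assms] by blast
  moreover have "finite (verts G)" using assms by (simp add: simple_graph_def)
  ultimately show ?thesis by (meson finite_Pow_iff finite_subset)
qed

lemma deg_ge1_of_mem: assumes "simple_graph G" "e \<in> edges G" "u \<in> e" shows "deg G u \<ge> 1"
proof -
  have "finite {e \<in> edges G. u \<in> e}" using finite_edges[OF assms(1)] by simp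
  moreover have "e \<in> {e \<in> edges G. u \<in> e}" using assms by simp
  ultimately have "card {e \<in> edges G. u \<in> e} > 0" by (metis card_gt_0_iff empty_iff)
  thus ?thesis by (simp add: deg_def)
qed

definition cls :: "'a graph \<Rightarrow> 'a set \<Rightarrow> nat \<times> nat" where
  "cls G e = (Min (deg G ` e), Max (deg G ` e))"

lemma cls_pair: "cls G {u,v} = (min (deg G u) (deg G v), max (deg G u) (deg G v))"
  by (simp add: cls_def)

lemma me_set_eq:
  assumes sg: "simple_graph G" and ij: "i \<le> j"
  shows "{e \<in> edges G. \<exists>u v. e = {u, v} \<and> u \<noteq> v \<and> deg G u = i \<and> deg G v = j}
       = {e \<in> edges G. cls G e = (i,j)}"
proof (intro equalityI subsetI)
  fix e assume "e \<in> {e \<in> edges G. \<exists>u v. e = {u, v} \<and> u \<noteq> v \<and> deg G u = i \<and> deg G v = j}"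
  then show "e \<in> {e \<in> edges G. cls G e = (i,j)}" using ij by (auto simp: cls_pair)
next
  fix e assume e: "e \<in> {e \<in> edges G. cls G e = (i,j)}"
  then obtain u v where uv: "e = {u,v}" "u \<noteq> v" using sg_edge[OF sg] by blast
  have c: "(min (deg G u) (deg G v), max (deg G u) (deg G v)) = (i,j)" using e uv by (simp add: cls_pair)
  show "e \<in> {e \<in> edges G. \<exists>u v. e = {u, v} \<and> u \<noteq> v \<and> deg G u = i \<and> deg G v = j}"
  proof (cases "deg G u \<le> deg G v")
    case True thus ?thesis using c e uv by auto
  next
    case False
    hence "deg G v = i" "deg G u = j" using c by auto
    moreover have "e = {v,u}" using uv by auto
    ultimately show ?thesis using e uv by blast
  qed
qed

lemma sum_by_class:
  assumes sg: "simple_graph G" and d4: "\<forall>v\<in>verts G. deg G v \<le> 4"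
    and sym: "\<And>i j. \<Phi> i j = \<Phi> j i"
    and F: "\<And>e u v. e \<in> edges G \<Longrightarrow> e = {u,v} \<Longrightarrow> u \<noteq> v \<Longrightarrow> F e = \<Phi> (deg G u) (deg G v)"
  shows "(\<Sum>e\<in>edges G. F e) = (\<Sum>p\<in>PP. real (me G (fst p) (snd p)) * \<Phi> (fst p) (snd p))"
proof -
  have fin: "finite (edges G)" by (rule finite_edges[OF sg])
  have img: "cls G ` edges G \<subseteq> PP"
  proof
    fix p assume "p \<in> cls G ` edges G"
    then obtain e where e: "e \<in> edges G" "p = cls G e" by auto
    then obtain u v where uv: "e = {u,v}" "u \<noteq> v" "u \<in> verts G" "v \<in> verts G" using sg_edge[OF sg] by blast
    have "deg G u \<ge> 1" "deg G v \<ge> 1" using deg_ge1_of_mem[OF sg e(1)] uv by auto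
    moreover have "deg G u \<le> 4" "deg G v \<le> 4" using d4 uv by auto
    ultimately show "p \<in> PP" using e uv by (auto simp: cls_pair PP_iff)
  qed
  have "(\<Sum>e\<in>edges G. F e) = (\<Sum>p\<in>PP. \<Sum>e\<in>{e. e \<in> edges G \<and> cls G e = p}. F e)"
    using sum.group[OF fin finite_PP img, of F] by simp
  also have "\<dots> = (\<Sum>p\<in>PP. real (me G (fst p) (snd p)) * \<Phi> (fst p) (snd p))"
  proof (rule sum.cong[OF refl])
    fix p assume p: "p \<in> PP"
    obtain i j where pij: "p = (i,j)" by fastforce
    have ij: "i \<le> j" using p pij by (simp add: PP_iff)
    have "\<forall>e\<in>{e. e \<in> edges G \<and> cls G e = (i,j)}. F e = \<Phi> i j"
    proof
      fix e assume e: "e \<in> {e. e \<in> edges G \<and> cls G e = (i,j)}"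
      then obtain u v where uv: "e = {u,v}" "u \<noteq> v" using sg_edge[OF sg] by blast
      have c: "(min (deg G u) (deg G v), max (deg G u) (deg G v)) = (i,j)" using e uv by (simp add: cls_pair)
      have "F e = \<Phi> (deg G u) (deg G v)" using F e uv by blast
      then show "F e = \<Phi> i j" using c sym by (cases "deg G u \<le> deg G v") auto
    qed
    hence "(\<Sum>e\<in>{e. e \<in> edges G \<and> cls G e = (i,j)}. F e) = real (card {e. e \<in> edges G \<and> cls G e = (i,j)}) * \<Phi> i j"
      by simp
    moreover have "me G i j = card {e. e \<in> edges G \<and> cls G e = (i,j)}"
      unfolding me_def using me_set_eq[OF sg ij] by simp
    ultimately show "(\<Sum>e\<in>{e. e \<in> edges G \<and> cls G e = p}. F e) = real (me G (fst p) (snd p)) * \<Phi> (fst p) (snd p)"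
      using pij by simp
  qed
  finally show ?thesis .
qed

lemma sum_PP: "(\<Sum>p\<in>PP. f p) = f (1,1) + f (1,2) + f (1,3) + f (1,4) + f (2,2) + f (2,3) + f (2,4) + f (3,3) + f (3,4) + f (4,4)"
  by (simp add: PP_def add.assoc)

lemma double_count:
  assumes sg: "simple_graph G"
  shows "(\<Sum>v\<in>verts G. real (deg G v) * \<psi> v) = (\<Sum>e\<in>edges G. \<Sum>v\<in>e. \<psi> v)"
proof -
  have fin: "finite (edges G)" by (rule finite_edges[OF sg])
  have fv: "finite (verts G)" using sg by (simp add: simple_graph_def)
  have "(\<Sum>v\<in>verts G. real (deg G v) * \<psi> v) = (\<Sum>v\<in>verts G. \<Sum>e\<in>{e. e \<in> edges G \<and> v \<in> e}. \<psi> v)"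
    by (simp add: deg_def)
  also have "\<dots> = (\<Sum>e\<in>edges G. \<Sum>v\<in>{v. v \<in> verts G \<and> v \<in> e}. \<psi> v)"
    by (rule sum.swap_restrict[OF fv fin])
  also have "\<dots> = (\<Sum>e\<in>edges G. \<Sum>v\<in>e. \<psi> v)"
  proof (rule sum.cong[OF refl])
    fix e assume "e \<in> edges G"
    hence "e \<subseteq> verts G" using sg_edge[OF sg] by blast
    hence "{v. v \<in> verts G \<and> v \<in> e} = e" by blast
    thus "(\<Sum>v\<in>{v. v \<in> verts G \<and> v \<in> e}. \<psi> v) = (\<Sum>v\<in>e. \<psi> v)" by simp
  qed
  finally show ?thesis .
qed

lemma connected_cross:
  assumes c: "connected_graph G" and S: "x \<in> S" "x \<in> verts G" "y \<in> verts G" "y \<notin> S"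
  shows "\<exists>u v. {u,v} \<in> edges G \<and> u \<noteq> v \<and> u \<in> S \<and> v \<notin> S"
proof -
  have p: "(adj G)\<^sup>*\<^sup>* x y" using c S by (simp add: connected_graph_def)
  have "\<And>z. (adj G)\<^sup>*\<^sup>* x z \<Longrightarrow> z \<notin> S \<Longrightarrow> \<exists>u v. {u,v} \<in> edges G \<and> u \<noteq> v \<and> u \<in> S \<and> v \<notin> S"
  proof -
    fix z assume "(adj G)\<^sup>*\<^sup>* x z" "z \<notin> S"
    thus "\<exists>u v. {u,v} \<in> edges G \<and> u \<noteq> v \<and> u \<in> S \<and> v \<notin> S"
    proof (induction rule: rtranclp_induct)
      case base thus ?case using S by simp
    next
      case (step w z)
      show ?case
      proof (cases "w \<in> S")
        case True thus ?thesis using step by (auto simp: adj_def)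
      next
        case False thus ?thesis using step by blast
      qed
    qed
  qed
  thus ?thesis using p S by blast
qed

lemma card_ge1: "finite A \<Longrightarrow> x \<in> A \<Longrightarrow> card A \<ge> 1"
  using card_0_eq by fastforce

lemma me_ge1:
  assumes sg: "simple_graph G" and e: "{u,v} \<in> edges G" and uv: "u \<noteq> v"
  shows "me G (deg G u) (deg G v) \<ge> 1"
proof -
  have "finite {e \<in> edges G. \<exists>a b. e = {a, b} \<and> a \<noteq> b \<and> deg G a = deg G u \<and> deg G b = deg G v}"
    using finite_edges[OF sg] by simp
  moreover have "{u,v} \<in> {e \<in> edges G. \<exists>a b. e = {a, b} \<and> a \<noteq> b \<and> deg G a = deg G u \<and> deg G b = deg G v}"
    using e uv by blast
  ultimately show ?thesis unfolding me_def by (rule card_ge1)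
qed

lemma nv_ge2:
  assumes sg: "simple_graph G" and m: "me G i i \<ge> 1"
  shows "nv G i \<ge> 2"
proof -
  have "{e \<in> edges G. \<exists>u v. e = {u, v} \<and> u \<noteq> v \<and> deg G u = i \<and> deg G v = i} \<noteq> {}"
    using m unfolding me_def by (metis card.empty not_one_le_zero)
  then obtain u v where uv: "{u,v} \<in> edges G" "u \<noteq> v" "deg G u = i" "deg G v = i" by blast
  have "u \<in> verts G" "v \<in> verts G" using sg_edge[OF sg uv(1)] by (auto simp: doubleton_eq_iff)
  hence "{u,v} \<subseteq> {v \<in> verts G. deg G v = i}" using uv by auto
  moreover have "finite {v \<in> verts G. deg G v = i}" using sg by (simp add: simple_graph_def)
  ultimately have "card {u,v} \<le> nv G i" unfolding nv_def by (rule card_mono[rotated])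
  thus ?thesis using uv by simp
qed



lemma ctg_sg: "CTG n G \<Longrightarrow> simple_graph G" by (simp add: CTG_def)
lemma ctg_d4: "CTG n G \<Longrightarrow> \<forall>v\<in>verts G. deg G v \<le> 4" by (simp add: CTG_def)

lemma deg_ge1_vert:
  assumes G: "CTG n G" and n: "n \<ge> 2" and v: "v \<in> verts G"
  shows "deg G v \<ge> 1"
proof -
  have sg: "simple_graph G" using G by (simp add: CTG_def)
  have cn: "card (verts G) = n" using G by (simp add: CTG_def)
  have "\<exists>w\<in>verts G. w \<noteq> v"
  proof (rule ccontr)
    assume "\<not> ?thesis"
    hence "verts G \<subseteq> {v}" by blast
    hence "card (verts G) \<le> 1" using card_mono[of "{v}" "verts G"] by simp
    thus False using cn n by simp
  qed
  then obtain w where w: "w \<in> verts G" "w \<noteq> v" by blast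
  have "(adj G)\<^sup>*\<^sup>* v w" using G v w by (simp add: CTG_def connected_graph_def)
  then obtain y where "adj G v y" using w(2) by (metis converse_rtranclpE)
  hence "{v,y} \<in> edges G" by (simp add: adj_def)
  thus ?thesis using deg_ge1_of_mem[OF sg] by blast
qed

lemma card_edges_eq: assumes sg: "simple_graph G" and e: "e \<in> edges G" shows "card e = 2"
  using sg_edge[OF sg e] by auto

lemma F_edges:
  assumes G: "CTG n G"
  shows "real n + 2 = (\<Sum>p\<in>PP. real (me G (fst p) (snd p)) * 1)"
proof -
  have "(\<Sum>e\<in>edges G. (1::real)) = (\<Sum>p\<in>PP. real (me G (fst p) (snd p)) * 1)"
    by (rule sum_by_class[OF ctg_sg[OF G] ctg_d4[OF G]]) auto
  moreover have "(\<Sum>e\<in>edges G. (1::real)) = real n + 2" using G by (simp add: CTG_def)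
  ultimately show ?thesis by simp
qed

lemma F_SO:
  fixes G :: "'a graph"
  assumes G: "CTG n G"
  shows "SO G = (\<Sum>p\<in>PP. real (me G (fst p) (snd p)) * sqrt (real (fst p) ^ 2 + real (snd p) ^ 2))"
  unfolding SO_def
proof (rule sum_by_class[OF ctg_sg[OF G] ctg_d4[OF G]])
  show "\<And>i j. sqrt (real i ^ 2 + real j ^ 2) = sqrt (real j ^ 2 + real i ^ 2)" by (simp add: add.commute)
next
  fix e :: "'a set" and u v assume "e = {u,v}" "u \<noteq> v"
  thus "sqrt (\<Sum>v\<in>e. (real (deg G v))\<^sup>2) = sqrt (real (deg G u) ^ 2 + real (deg G v) ^ 2)" by simp
qed

lemma F_L:
  assumes G: "CTG n G" and n: "n \<ge> 2"
  shows "(\<Sum>p\<in>PP. real (me G (fst p) (snd p)) * ((1 - 2 / real (fst p)) + (1 - 2 / real (snd p)))) = 4"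
proof -
  have sg: "simple_graph G" using G by (simp add: CTG_def)
  have fv: "finite (verts G)" using sg by (simp add: simple_graph_def)
  have h1: "(\<Sum>v\<in>verts G. real (deg G v) * 1) = (\<Sum>e\<in>edges G. \<Sum>v\<in>e. (1::real))"
    by (rule double_count[OF sg])
  have "(\<Sum>e\<in>edges G. \<Sum>v\<in>e. (1::real)) = (\<Sum>e\<in>edges G. 2)"
    by (rule sum.cong[OF refl]) (simp add: card_edges_eq[OF sg])
  also have "\<dots> = 2 * (real n + 2)" using G by (simp add: CTG_def)
  finally have h2: "(\<Sum>v\<in>verts G. real (deg G v)) = 2 * (real n + 2)" using h1 by simp
  have h3: "(\<Sum>v\<in>verts G. real (deg G v) * (1 - 2 / real (deg G v))) = (\<Sum>v\<in>verts G. real (deg G v) - 2)"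
  proof (rule sum.cong[OF refl])
    fix v assume "v \<in> verts G"
    hence "deg G v \<ge> 1" by (rule deg_ge1_vert[OF G n])
    thus "real (deg G v) * (1 - 2 / real (deg G v)) = real (deg G v) - 2" by (simp add: field_simps)
  qed
  have h4: "(\<Sum>v\<in>verts G. real (deg G v) - 2) = 4"
    using h2 G by (simp add: sum_subtractf CTG_def)
  have h5: "(\<Sum>v\<in>verts G. real (deg G v) * (1 - 2 / real (deg G v))) = (\<Sum>e\<in>edges G. \<Sum>v\<in>e. (1 - 2 / real (deg G v)))"
    by (rule double_count[OF sg])
  have "(\<Sum>e\<in>edges G. \<Sum>v\<in>e. (1 - 2 / real (deg G v))) = (\<Sum>p\<in>PP. real (me G (fst p) (snd p)) * ((1 - 2 / real (fst p)) + (1 - 2 / real (snd p))))"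
    by (rule sum_by_class[OF sg ctg_d4[OF G]]) auto
  thus ?thesis using h3 h4 h5 by simp
qed

lemma F_half:
  assumes G: "CTG n G"
  shows "real d * real (nv G d) = (\<Sum>p\<in>PP. real (me G (fst p) (snd p)) * ((if fst p = d then 1 else 0) + (if snd p = d then 1 else 0)))"
proof -
  have sg: "simple_graph G" using G by (simp add: CTG_def)
  have fv: "finite (verts G)" using sg by (simp add: simple_graph_def)
  have "(\<Sum>v\<in>verts G. real (deg G v) * (if deg G v = d then 1 else 0)) = (\<Sum>e\<in>edges G. \<Sum>v\<in>e. (if deg G v = d then 1 else (0::real)))"
    by (rule double_count[OF sg])
  also have "\<dots> = (\<Sum>p\<in>PP. real (me G (fst p) (snd p)) * ((if fst p = d then 1 else 0) + (if snd p = d then 1 else 0)))"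
    by (rule sum_by_class[OF sg ctg_d4[OF G]]) auto
  finally have a: "(\<Sum>v\<in>verts G. real (deg G v) * (if deg G v = d then 1 else 0)) = \<dots>" .
  have "(\<Sum>v\<in>verts G. real (deg G v) * (if deg G v = d then 1 else 0)) = (\<Sum>v\<in>verts G. if deg G v = d then real d else 0)"
    by (rule sum.cong) auto
  also have "\<dots> = (\<Sum>v\<in>{v \<in> verts G. deg G v = d}. real d)"
    by (rule sum.inter_filter[OF fv, symmetric])
  also have "\<dots> = real d * real (nv G d)" by (simp add: nv_def)
  finally show ?thesis using a by simp
qed

lemma F_verts:
  assumes G: "CTG n G" and n: "n \<ge> 2"
  shows "n = nv G 1 + nv G 2 + nv G 3 + nv G 4"
proof -
  have sg: "simple_graph G" using G by (simp add: CTG_def)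
  have fv: "finite (verts G)" using sg by (simp add: simple_graph_def)
  have img: "deg G ` verts G \<subseteq> {1,2,3,4}"
  proof
    fix d assume "d \<in> deg G ` verts G"
    then obtain v where v: "v \<in> verts G" "d = deg G v" by blast
    have "deg G v \<ge> 1" "deg G v \<le> 4" using deg_ge1_vert[OF G n v(1)] ctg_d4[OF G] v by auto
    thus "d \<in> {1,2,3,4}" using v by auto
  qed
  have "(\<Sum>y\<in>{1,2,3,4}. \<Sum>x\<in>{x. x \<in> verts G \<and> deg G x = y}. (1::nat)) = (\<Sum>x\<in>verts G. 1)"
    by (rule sum.group[OF fv _ img]) simp
  thus ?thesis using G by (simp add: nv_def CTG_def)
qed

lemma edge_profile_intro:
  assumes "int (me G 1 1) = f 1 1" "int (me G 1 2) = f 1 2" "int (me G 1 3) = f 1 3" "int (me G 1 4) = f 1 4"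
    "int (me G 2 2) = f 2 2" "int (me G 2 3) = f 2 3" "int (me G 2 4) = f 2 4"
    "int (me G 3 3) = f 3 3" "int (me G 3 4) = f 3 4" "int (me G 4 4) = f 4 4"
  shows "edge_profile G f"
  unfolding edge_profile_def
proof (intro allI impI)
  fix i j :: nat assume "1 \<le> i" "i \<le> j" "j \<le> 4"
  hence "(i,j) \<in> PP" by (simp add: PP_iff)
  thus "int (me G i j) = f i j" using assms unfolding PP_def by auto
qed

lemma edge_profile_D:
  assumes "edge_profile G f"
  shows "int (me G 1 1) = f 1 1" "int (me G 1 2) = f 1 2" "int (me G 1 3) = f 1 3" "int (me G 1 4) = f 1 4"
    "int (me G 2 2) = f 2 2" "int (me G 2 3) = f 2 3" "int (me G 2 4) = f 2 4"
    "int (me G 3 3) = f 3 3" "int (me G 3 4) = f 3 4" "int (me G 4 4) = f 4 4"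
  using assms unfolding edge_profile_def by auto



lemma sqrt_hi: assumes "0 \<le> b" "x < b^2" shows "sqrt x < b"
  using assms real_sqrt_less_iff real_less_lsqrt
  by (metis abs_of_nonneg real_sqrt_abs real_sqrt_less_mono)

lemma sqrt_bounds:
  "(1414213/1000000) < sqrt 2" "sqrt 2 < (1414214/1000000)"
  "(2236067/1000000) < sqrt 5" "sqrt 5 < (2236068/1000000)"
  "(2828427/1000000) < sqrt 8" "sqrt 8 < (2828428/1000000)"
  "(3162277/1000000) < sqrt 10" "sqrt 10 < (3162278/1000000)"
  "(3605551/1000000) < sqrt 13" "sqrt 13 < (3605552/1000000)"
  "(4123105/1000000) < sqrt 17" "sqrt 17 < (4123106/1000000)"
  "(4242640/1000000) < sqrt 18" "sqrt 18 < (4242641/1000000)"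
  "(4472135/1000000) < sqrt 20" "sqrt 20 < (4472136/1000000)"
  "(4999999/1000000) < sqrt 25" "sqrt 25 < (5000001/1000000)"
  "(5656854/1000000) < sqrt 32" "sqrt 32 < (5656855/1000000)"
  by (rule real_less_rsqrt sqrt_hi; simp add: power2_eq_square)+

lemma excess:
  assumes G: "CTG n G"
  shows "SO G = (real n + 2) * sqrt 8
     + real (me G 1 1) * (sqrt 2 - sqrt 8) + real (me G 1 2) * (sqrt 5 - sqrt 8)
     + real (me G 1 3) * (sqrt 10 - sqrt 8) + real (me G 1 4) * (sqrt 17 - sqrt 8)
     + real (me G 2 3) * (sqrt 13 - sqrt 8) + real (me G 2 4) * (sqrt 20 - sqrt 8)
     + real (me G 3 3) * (sqrt 18 - sqrt 8) + real (me G 3 4) * (sqrt 25 - sqrt 8)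
     + real (me G 4 4) * (sqrt 32 - sqrt 8)"
proof -
  have A: "SO G = real (me G 1 1) * sqrt 2 + real (me G 1 2) * sqrt 5 + real (me G 1 3) * sqrt 10
     + real (me G 1 4) * sqrt 17 + real (me G 2 2) * sqrt 8 + real (me G 2 3) * sqrt 13
     + real (me G 2 4) * sqrt 20 + real (me G 3 3) * sqrt 18 + real (me G 3 4) * sqrt 25
     + real (me G 4 4) * sqrt 32"
    using F_SO[OF G] by (simp add: sum_PP)
  have B: "real n + 2 = real (me G 1 1) + real (me G 1 2) + real (me G 1 3)
     + real (me G 1 4) + real (me G 2 2) + real (me G 2 3)
     + real (me G 2 4) + real (me G 3 3) + real (me G 3 4) + real (me G 4 4)"
    using F_edges[OF G] by (simp add: sum_PP)
  show ?thesis unfolding A B by (simp add: algebra_simps)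
qed

lemma C_aux: "(a::real) < 2236068/1000000 \<Longrightarrow> 2828427/1000000 < c \<Longrightarrow> d < 3605552/1000000
  \<Longrightarrow> e < 4242641/1000000 \<Longrightarrow> (a - c) + (d - c) + 7 * (e - c) < 10084265/1000000"
  by (simp add: field_simps)

lemma slack_lin:
  fixes x11 x12 x13 x14 x23 x24 x33 x34 x44 y11 y12 y13 y14 y23 y24 y33 y34 y44 :: real
  assumes nn: "x11 \<ge> 0" "x12 \<ge> 0" "x13 \<ge> 0" "x14 \<ge> 0" "x23 \<ge> 0" "x24 \<ge> 0" "x33 \<ge> 0" "x34 \<ge> 0" "x44 \<ge> 0"
    and L: "2*x23+3*x24+4*x33+5*x34+6*x44 = 24 + 12*x11 + 6*x12 + 4*x13 + 3*x14"
    and y: "y11 \<ge> x11 * (-1414215/1000000)" "y12 \<ge> x12 * (-592361/1000000)" "y13 \<ge> x13 * (333849/1000000)"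
       "y14 \<ge> x14 * (1294677/1000000)" "y23 \<ge> x23 * (777123/1000000)" "y24 \<ge> x24 * (1643707/1000000)"
       "y33 \<ge> x33 * (1414212/1000000)" "y34 \<ge> x34 * (2171571/1000000)" "y44 \<ge> x44 * (2828426/1000000)"
    and H: "x11 \<ge> 1 \<or> x13 \<ge> 1 \<or> x14 \<ge> 1 \<or> x12 \<ge> 2 \<or> (x12 \<ge> 1 \<and> x23 \<ge> 2)
      \<or> (x12 \<ge> 1 \<and> x24+x34+x44 \<ge> 1) \<or> x24+x34+2*x44 \<ge> 8 \<or> x24+x34 \<ge> 4"
  shows "y11+y12+y13+y14+y23+y24+y33+y34+y44 > 10084265/1000000"
  using H
proof (elim disjE conjE)
  assume "x11 \<ge> 1" thus ?thesis using nn L y by linarith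
next
  assume "x13 \<ge> 1" thus ?thesis using nn L y by linarith
next
  assume "x14 \<ge> 1" thus ?thesis using nn L y by linarith
next
  assume "x12 \<ge> 2" thus ?thesis using nn L y by linarith
next
  assume "x12 \<ge> 1" "x23 \<ge> 2" thus ?thesis using nn L y by linarith
next
  assume "x12 \<ge> 1" "x24+x34+x44 \<ge> 1" thus ?thesis using nn L y by linarith
next
  assume "x24+x34+2*x44 \<ge> 8" thus ?thesis using nn L y by linarith
next
  assume "x24+x34 \<ge> 4" thus ?thesis using nn L y by linarith
qed

lemma slack:
  fixes x11 x12 x13 x14 x23 x24 x33 x34 x44 :: real
  assumes nn: "x11 \<ge> 0" "x12 \<ge> 0" "x13 \<ge> 0" "x14 \<ge> 0" "x23 \<ge> 0" "x24 \<ge> 0" "x33 \<ge> 0" "x34 \<ge> 0" "x44 \<ge> 0"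
    and L: "2*x23+3*x24+4*x33+5*x34+6*x44 = 24 + 12*x11 + 6*x12 + 4*x13 + 3*x14"
    and H: "x11 \<ge> 1 \<or> x13 \<ge> 1 \<or> x14 \<ge> 1 \<or> x12 \<ge> 2 \<or> (x12 \<ge> 1 \<and> x23 \<ge> 2)
      \<or> (x12 \<ge> 1 \<and> x24+x34+x44 \<ge> 1) \<or> x24+x34+2*x44 \<ge> 8 \<or> x24+x34 \<ge> 4"
  shows "x11 * (sqrt 2 - sqrt 8) + x12 * (sqrt 5 - sqrt 8)
     + x13 * (sqrt 10 - sqrt 8) + x14 * (sqrt 17 - sqrt 8)
     + x23 * (sqrt 13 - sqrt 8) + x24 * (sqrt 20 - sqrt 8)
     + x33 * (sqrt 18 - sqrt 8) + x34 * (sqrt 25 - sqrt 8)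
     + x44 * (sqrt 32 - sqrt 8) > (sqrt 5 - sqrt 8) + (sqrt 13 - sqrt 8) + 7 * (sqrt 18 - sqrt 8)"
proof -
  note b = sqrt_bounds
  have l11: "x11 * (sqrt 2 - sqrt 8) \<ge> x11 * ((1414213/1000000) - (2828428/1000000))" using b nn by (intro mult_left_mono) auto
  have l12: "x12 * (sqrt 5 - sqrt 8) \<ge> x12 * ((2236067/1000000) - (2828428/1000000))" using b nn by (intro mult_left_mono) auto
  have l13: "x13 * (sqrt 10 - sqrt 8) \<ge> x13 * ((3162277/1000000) - (2828428/1000000))" using b nn by (intro mult_left_mono) auto
  have l14: "x14 * (sqrt 17 - sqrt 8) \<ge> x14 * ((4123105/1000000) - (2828428/1000000))" using b nn by (intro mult_left_mono) auto
  have l23: "x23 * (sqrt 13 - sqrt 8) \<ge> x23 * ((3605551/1000000) - (2828428/1000000))" using b nn by (intro mult_left_mono) auto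
  have l24: "x24 * (sqrt 20 - sqrt 8) \<ge> x24 * ((4472135/1000000) - (2828428/1000000))" using b nn by (intro mult_left_mono) auto
  have l33: "x33 * (sqrt 18 - sqrt 8) \<ge> x33 * ((4242640/1000000) - (2828428/1000000))" using b nn by (intro mult_left_mono) auto
  have l34: "x34 * (sqrt 25 - sqrt 8) \<ge> x34 * ((4999999/1000000) - (2828428/1000000))" using b nn by (intro mult_left_mono) auto
  have l44: "x44 * (sqrt 32 - sqrt 8) \<ge> x44 * ((5656854/1000000) - (2828428/1000000))" using b nn by (intro mult_left_mono) auto
  have C: "(sqrt 5 - sqrt 8) + (sqrt 13 - sqrt 8) + 7 * (sqrt 18 - sqrt 8) < 10084265/1000000"
    by (rule C_aux) (use b in simp_all)
  have "x11 * (sqrt 2 - sqrt 8) + x12 * (sqrt 5 - sqrt 8)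
     + x13 * (sqrt 10 - sqrt 8) + x14 * (sqrt 17 - sqrt 8)
     + x23 * (sqrt 13 - sqrt 8) + x24 * (sqrt 20 - sqrt 8)
     + x33 * (sqrt 18 - sqrt 8) + x34 * (sqrt 25 - sqrt 8)
     + x44 * (sqrt 32 - sqrt 8) > 10084265/1000000"
    by (rule slack_lin[OF nn L _ _ _ _ _ _ _ _ _ H]) (use l11 l12 l13 l14 l23 l24 l33 l34 l44 in simp_all)
  from less_trans[OF C this] show ?thesis .
qed



lemma SO_gamma_k:
  assumes g: "gamma_k n k G" and k: "k \<le> 5"
  shows "SO G = (real n + 2) * sqrt 8 + (2 + 2 * real k) * (sqrt 13 - sqrt 8) + (5 - real k) * (sqrt 18 - sqrt 8)"
proof -
  have G: "CTG n G" and ep: "edge_profile G (\<lambda>i j. if (i, j) = (2, 3) then 2 + 2 * int k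
                           else if (i, j) = (3, 3) then 5 - int k
                           else if (i, j) = (2, 2) then int n - 5 - int k
                           else 0)" using g by (auto simp: gamma_k_def)
  note D = edge_profile_D[OF ep]
  have "real_of_int (int (me G 1 1)) = 0" "real_of_int (int (me G 1 2)) = 0" "real_of_int (int (me G 1 3)) = 0"
    "real_of_int (int (me G 1 4)) = 0" "real_of_int (int (me G 2 4)) = 0" "real_of_int (int (me G 3 4)) = 0"
    "real_of_int (int (me G 4 4)) = 0" "real_of_int (int (me G 2 3)) = real_of_int (2 + 2 * int k)"
    "real_of_int (int (me G 3 3)) = real_of_int (5 - int k)"
    using D by simp_all
  hence e: "real (me G 1 1) = 0" "real (me G 1 2) = 0" "real (me G 1 3) = 0"
    "real (me G 1 4) = 0" "real (me G 2 4) = 0" "real (me G 3 4) = 0"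
    "real (me G 4 4) = 0" "real (me G 2 3) = 2 + 2 * real k"
    "real (me G 3 3) = 5 - real k" by simp_all
  show ?thesis using excess[OF G] unfolding e by simp
qed

lemma SO_gamma65:
  assumes g: "gamma65 n G"
  shows "SO G = (real n + 2) * sqrt 8 + (sqrt 5 - sqrt 8) + (sqrt 13 - sqrt 8) + 7 * (sqrt 18 - sqrt 8)"
proof -
  have G: "CTG n G" and ep: "edge_profile G (\<lambda>i j. if (i, j) = (1, 2) then 1
                           else if (i, j) = (2, 3) then 1
                           else if (i, j) = (3, 3) then 7
                           else if (i, j) = (2, 2) then int n - 7
                           else 0)" using g by (auto simp: gamma65_def)
  note D = edge_profile_D[OF ep]
  have e: "me G 1 1 = 0" "me G 1 2 = 1" "me G 1 3 = 0"
    "me G 1 4 = 0" "me G 2 4 = 0" "me G 3 4 = 0"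
    "me G 4 4 = 0" "me G 2 3 = 1"
    "me G 3 3 = 7" using D by simp_all
  show ?thesis using excess[OF G] unfolding e by simp
qed



lemma basic_facts:
  assumes G: "CTG n G" and n: "n \<ge> 2"
  shows "2*me G 2 3+3*me G 2 4+4*me G 3 3+5*me G 3 4+6*me G 4 4 = 24 + 12*me G 1 1+6*me G 1 2+4*me G 1 3+3*me G 1 4"
    and "nv G 1 = 2*me G 1 1 + me G 1 2 + me G 1 3 + me G 1 4"
    and "2*nv G 2 = me G 1 2 + 2*me G 2 2 + me G 2 3 + me G 2 4"
    and "3*nv G 3 = me G 1 3 + me G 2 3 + 2*me G 3 3 + me G 3 4"
    and "4*nv G 4 = me G 1 4 + me G 2 4 + me G 3 4 + 2*me G 4 4"
    and "n + 2 = me G 1 1 + me G 1 2 + me G 1 3 + me G 1 4 + me G 2 2 + me G 2 3 + me G 2 4 + me G 3 3 + me G 3 4 + me G 4 4"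
proof -
  have "real (2*me G 2 3+3*me G 2 4+4*me G 3 3+5*me G 3 4+6*me G 4 4) = real (24 + 12*me G 1 1+6*me G 1 2+4*me G 1 3+3*me G 1 4)"
    using F_L[OF G n] by (simp add: sum_PP)
  thus "2*me G 2 3+3*me G 2 4+4*me G 3 3+5*me G 3 4+6*me G 4 4 = 24 + 12*me G 1 1+6*me G 1 2+4*me G 1 3+3*me G 1 4"
    by (simp only: of_nat_eq_iff)
  have "real (nv G 1) = real (2*me G 1 1 + me G 1 2 + me G 1 3 + me G 1 4)"
    using F_half[OF G, of 1] by (simp add: sum_PP)
  thus "nv G 1 = 2*me G 1 1 + me G 1 2 + me G 1 3 + me G 1 4" by (simp only: of_nat_eq_iff)
  have "real (2*nv G 2) = real (me G 1 2 + 2*me G 2 2 + me G 2 3 + me G 2 4)"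
    using F_half[OF G, of 2] by (simp add: sum_PP)
  thus "2*nv G 2 = me G 1 2 + 2*me G 2 2 + me G 2 3 + me G 2 4" by (simp only: of_nat_eq_iff)
  have "real (3*nv G 3) = real (me G 1 3 + me G 2 3 + 2*me G 3 3 + me G 3 4)"
    using F_half[OF G, of 3] by (simp add: sum_PP)
  thus "3*nv G 3 = me G 1 3 + me G 2 3 + 2*me G 3 3 + me G 3 4" by (simp only: of_nat_eq_iff)
  have "real (4*nv G 4) = real (me G 1 4 + me G 2 4 + me G 3 4 + 2*me G 4 4)"
    using F_half[OF G, of 4] by (simp add: sum_PP)
  thus "4*nv G 4 = me G 1 4 + me G 2 4 + me G 3 4 + 2*me G 4 4" by (simp only: of_nat_eq_iff)
  have "real (n + 2) = real (me G 1 1 + me G 1 2 + me G 1 3 + me G 1 4 + me G 2 2 + me G 2 3 + me G 2 4 + me G 3 3 + me G 3 4 + me G 4 4)"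
    using F_edges[OF G] by (simp add: sum_PP)
  thus "n + 2 = me G 1 1 + me G 1 2 + me G 1 3 + me G 1 4 + me G 2 2 + me G 2 3 + me G 2 4 + me G 3 3 + me G 3 4 + me G 4 4"
    by (simp only: of_nat_eq_iff)
qed


lemma slack_nat:
  fixes a11 a12 a13 a14 a23 a24 a33 a34 a44 :: nat
  assumes L: "2*a23+3*a24+4*a33+5*a34+6*a44 = 24 + 12*a11 + 6*a12 + 4*a13 + 3*a14"
    and H: "a11 \<ge> 1 \<or> a13 \<ge> 1 \<or> a14 \<ge> 1 \<or> a12 \<ge> 2 \<or> (a12 \<ge> 1 \<and> a23 \<ge> 2)
      \<or> (a12 \<ge> 1 \<and> a24+a34+a44 \<ge> 1) \<or> a24+a34+2*a44 \<ge> 8 \<or> a24+a34 \<ge> 4"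
  shows "real a11 * (sqrt 2 - sqrt 8) + real a12 * (sqrt 5 - sqrt 8)
     + real a13 * (sqrt 10 - sqrt 8) + real a14 * (sqrt 17 - sqrt 8)
     + real a23 * (sqrt 13 - sqrt 8) + real a24 * (sqrt 20 - sqrt 8)
     + real a33 * (sqrt 18 - sqrt 8) + real a34 * (sqrt 25 - sqrt 8)
     + real a44 * (sqrt 32 - sqrt 8) > (sqrt 5 - sqrt 8) + (sqrt 13 - sqrt 8) + 7 * (sqrt 18 - sqrt 8)"
proof (rule slack)
  have "real (2*a23+3*a24+4*a33+5*a34+6*a44) = real (24 + 12*a11 + 6*a12 + 4*a13 + 3*a14)" using L by simp
  thus "2*real a23+3*real a24+4*real a33+5*real a34+6*real a44 = 24 + 12*real a11 + 6*real a12 + 4*real a13 + 3*real a14"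
    by simp
  have c: "\<And>k a. (k::nat) \<le> a \<Longrightarrow> real k \<le> real a" by simp
  have c7: "8 \<le> a24+a34+2*a44 \<Longrightarrow> 8 \<le> real a24 + real a34 + 2*real a44"
    using c[of 8 "a24+a34+2*a44"] by simp
  have c8: "4 \<le> a24+a34 \<Longrightarrow> 4 \<le> real a24 + real a34"
    using c[of 4 "a24+a34"] by simp
  have c6: "1 \<le> a24+a34+a44 \<Longrightarrow> 1 \<le> real a24 + real a34 + real a44"
    using c[of 1 "a24+a34+a44"] by simp
  have c1: "\<And>a. 1 \<le> a \<Longrightarrow> 1 \<le> real a" "\<And>a. 2 \<le> a \<Longrightarrow> 2 \<le> real a" by simp_all
  from H show "real a11 \<ge> 1 \<or> real a13 \<ge> 1 \<or> real a14 \<ge> 1 \<or> real a12 \<ge> 2 \<or> (real a12 \<ge> 1 \<and> real a23 \<ge> 2)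
      \<or> (real a12 \<ge> 1 \<and> real a24+real a34+real a44 \<ge> 1) \<or> real a24+real a34+2*real a44 \<ge> 8 \<or> real a24+real a34 \<ge> 4"
    using c1 c6 c7 c8 by blast
qed simp_all

lemma other:
  assumes n: "n \<ge> 6" and G: "CTG n G"
    and nk: "\<forall>k\<le>5. \<not> gamma_k n k G" and n65: "\<not> gamma65 n G"
  shows "SO G > (real n + 2) * sqrt 8 + (sqrt 5 - sqrt 8) + (sqrt 13 - sqrt 8) + 7 * (sqrt 18 - sqrt 8)"
proof -
  have n2: "n \<ge> 2" using n by simp
  have sg: "simple_graph G" using G by (simp add: CTG_def)
  note bf = basic_facts[OF G n2]
  note L = bf(1) and H1 = bf(2) and H2 = bf(3) and H3 = bf(4) and H4 = bf(5) and En = bf(6)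
  have Vn: "n = nv G 1 + nv G 2 + nv G 3 + nv G 4" by (rule F_verts[OF G n2])
  show ?thesis
  proof (cases "me G 1 1 \<ge> 1 \<or> me G 1 3 \<ge> 1 \<or> me G 1 4 \<ge> 1 \<or> me G 1 2 \<ge> 2 \<or> (me G 1 2 \<ge> 1 \<and> me G 2 3 \<ge> 2)
      \<or> (me G 1 2 \<ge> 1 \<and> me G 2 4 + me G 3 4 + me G 4 4 \<ge> 1) \<or> me G 2 4 + me G 3 4 + 2 * me G 4 4 \<ge> 8
      \<or> me G 2 4 + me G 3 4 \<ge> 4")
    case True
    from slack_nat[OF L True] show ?thesis using excess[OF G] by linarith
  next
    case False
    hence z: "me G 1 1 = 0" "me G 1 3 = 0" "me G 1 4 = 0" "me G 1 2 \<le> 1"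
      and z2: "me G 1 2 \<ge> 1 \<Longrightarrow> me G 2 3 \<le> 1 \<and> me G 2 4 = 0 \<and> me G 3 4 = 0 \<and> me G 4 4 = 0"
      and z3: "me G 2 4 + me G 3 4 + 2 * me G 4 4 < 8" "me G 2 4 + me G 3 4 < 4"
      by auto
    show ?thesis
    proof (cases "me G 1 2 = 1")
      case True
      note t = True
      have w: "me G 2 3 \<le> 1" "me G 2 4 = 0" "me G 3 4 = 0" "me G 4 4 = 0" using z2 True by auto
      have w2: "me G 2 3 = 1" "me G 3 3 = 7" using L w z True by presburger+
      have "gamma65 n G"
        unfolding gamma65_def
      proof (intro conjI)
        show "CTG n G" by (rule G)
        show "nv G 4 = 0" using H4 z w by simp
        show "nv G 3 = 5" using H3 z w w2 by simp
        show "nv G 1 = 1" using H1 z w t by simp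
        have "nv G 2 + 6 = n" using Vn H1 H3 H4 z w w2 t by simp
        thus "int (nv G 2) = int n - 6" by linarith
        have "me G 2 2 + 7 = n" using En z w w2 t by simp
        hence m22: "int (me G 2 2) = int n - 7" by linarith
        show "edge_profile G (\<lambda>i j. if (i, j) = (1, 2) then 1
                           else if (i, j) = (2, 3) then 1
                           else if (i, j) = (3, 3) then 7
                           else if (i, j) = (2, 2) then int n - 7
                           else 0)"
          by (rule edge_profile_intro) (simp_all add: z w w2 t m22 z[unfolded One_nat_def] t[unfolded One_nat_def])
      qed
      thus ?thesis using n65 by simp
    next
      case False
      hence z12: "me G 1 2 = 0" using z by simp
      have nv1: "nv G 1 = 0" using H1 z z12 by simp
      show ?thesis
      proof (cases "me G 2 4 + me G 3 4 + me G 4 4 \<ge> 1")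
        case True
        show ?thesis
        proof (cases "me G 4 4 \<ge> 1")
          case True
          have "nv G 4 \<ge> 2" by (rule nv_ge2[OF sg True])
          thus ?thesis using H4 z3 z by simp
        next
          case False
          thus ?thesis using H4 z3 z \<open>me G 2 4 + me G 3 4 + me G 4 4 \<ge> 1\<close> by presburger
        qed
      next
        case False
        hence w: "me G 2 4 = 0" "me G 3 4 = 0" "me G 4 4 = 0" by auto
        have nv4: "nv G 4 = 0" using H4 z w by simp
        have nv3: "nv G 3 = 4" using H3 L z z12 w by simp
        show ?thesis
        proof (cases "me G 2 3 = 0")
          case True
          define S where "S = {v \<in> verts G. deg G v = 3}"
          have fin: "finite (verts G)" using sg by (simp add: simple_graph_def)
          have "S \<noteq> {}" using nv3 unfolding S_def nv_def by (metis card.empty zero_neq_numeral)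
          then obtain x where x: "x \<in> S" by blast
          have "S \<noteq> verts G" using nv3 n G unfolding S_def nv_def CTG_def by auto
          moreover have "S \<subseteq> verts G" unfolding S_def by auto
          ultimately obtain y where y: "y \<in> verts G" "y \<notin> S" by blast
          have xv: "x \<in> verts G" using x unfolding S_def by auto
          obtain u v where uv: "{u,v} \<in> edges G" "u \<noteq> v" "u \<in> S" "v \<notin> S"
            using connected_cross[OF _ x xv y] G by (auto simp: CTG_def)
          have du: "deg G u = 3" using uv sg_edge[OF sg uv(1)] unfolding S_def by (auto simp: doubleton_eq_iff)
          have vV: "v \<in> verts G" using sg_edge[OF sg uv(1)] by (auto simp: doubleton_eq_iff)
          have dv: "deg G v \<noteq> 3" using uv vV unfolding S_def by auto
          have dv1: "deg G v \<ge> 1" using deg_ge1_of_mem[OF sg uv(1)] by simp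
          have dv4: "deg G v \<le> 4" using vV G by (simp add: CTG_def)
          have m1: "me G 3 (deg G v) \<ge> 1" using me_ge1[OF sg uv(1) uv(2)] du by simp
          have "{v,u} \<in> edges G" using uv(1) by (simp add: insert_commute)
          hence m2: "me G (deg G v) 3 \<ge> 1" using me_ge1[OF sg _ uv(2)[symmetric]] du by simp
          have "deg G v = 1 \<or> deg G v = 2 \<or> deg G v = 4" using dv dv1 dv4 by arith
          thus ?thesis using m1 m2 z True w by auto
        next
          case False
          define k where "k = 5 - me G 3 3"
          have k5: "k \<le> 5" and m33: "me G 3 3 = 5 - k" and m23: "me G 2 3 = 2 + 2 * k"
            using L z z12 w False unfolding k_def by presburger+
          have "gamma_k n k G"
            unfolding gamma_k_def
          proof (intro conjI)
            show "CTG n G" by (rule G)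
            show "nv G 4 = 0" by (rule nv4)
            show "nv G 3 = 4" by (rule nv3)
            show "nv G 1 = 0" by (rule nv1)
            have "nv G 2 + 4 = n" using Vn nv1 nv3 nv4 by simp
            thus "int (nv G 2) = int n - 4" by linarith
            have "me G 2 2 + 5 + k = n" using En z z12 w m33 m23 k5 by simp
            hence m22: "int (me G 2 2) = int n - 5 - int k" by linarith
            have m33i: "int (me G 3 3) = 5 - int k" using m33 k5 by simp
            show "edge_profile G (\<lambda>i j. if (i, j) = (2, 3) then 2 + 2 * int k
                           else if (i, j) = (3, 3) then 5 - int k
                           else if (i, j) = (2, 2) then int n - 5 - int k
                           else 0)"
              by (rule edge_profile_intro) (simp_all add: z z12 w m23 m33i m22 z[unfolded One_nat_def] z12[unfolded One_nat_def])
          qed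
          thus ?thesis using nk k5 by blast
        qed
      qed
    qed
  qed
qed



lemma T_aux: "(d::real) > 3605551/1000000 \<Longrightarrow> c < 2828428/1000000 \<Longrightarrow> e < 4242641/1000000
  \<Longrightarrow> 2*(d - c) - (e - c) > 0"
  by (simp add: field_simps)

lemma U_aux: "(a::real) > 2236067/1000000 \<Longrightarrow> c > 2828427/1000000 \<Longrightarrow> c < 2828428/1000000 \<Longrightarrow> d < 3605552/1000000
  \<Longrightarrow> e > 4242640/1000000 \<Longrightarrow> 12*(d - c) < (a - c) + (d - c) + 7*(e - c)"
  by (simp add: field_simps)

lemma final_abs:
  fixes X t u v a1 a2 a3 a4 a5 a6 a7 a :: real
  assumes T: "2*t - u > 0" and U: "12*t < v + t + 7*u"
    and "a1 = X + 2*t + 5*u" "a2 = X + 4*t + 4*u" "a3 = X + 6*t + 3*u" "a4 = X + 8*t + 2*u"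
    "a5 = X + 10*t + u" "a6 = X + 12*t" "a7 = X + v + t + 7*u" "a > X + v + t + 7*u"
  shows "a1 < a2 \<and> a2 < a3 \<and> a3 < a4 \<and> a4 < a5 \<and> a5 < a6 \<and> a6 < a7 \<and> a7 < a"
  using assms by linarith

theorem theorem3p12:
  fixes n :: nat
    and G1 :: "'a graph" and G2 :: "'b graph" and G3 :: "'c graph" and G4 :: "'d graph"
    and G5 :: "'e graph" and G6 :: "'f graph" and G7 :: "'g graph" and G :: "'h graph"
  assumes "n \<ge> 6"
    and "gamma_k n 0 G1" and "gamma_k n 1 G2" and "gamma_k n 2 G3" and "gamma_k n 3 G4"
    and "gamma_k n 4 G5" and "gamma_k n 5 G6" and "gamma65 n G7"
    and "CTG n G"
    and "\<forall>k\<le>5. \<not> gamma_k n k G" and "\<not> gamma65 n G"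
  shows "SO G1 < SO G2 \<and> SO G2 < SO G3 \<and> SO G3 < SO G4 \<and> SO G4 < SO G5 \<and>
         SO G5 < SO G6 \<and> SO G6 < SO G7 \<and> SO G7 < SO G"
proof -
  note b = sqrt_bounds
  have T: "2*(sqrt 13 - sqrt 8) - (sqrt 18 - sqrt 8) > 0" by (rule T_aux) (use b in simp_all)
  have U: "12*(sqrt 13 - sqrt 8) < (sqrt 5 - sqrt 8) + (sqrt 13 - sqrt 8) + 7*(sqrt 18 - sqrt 8)"
    by (rule U_aux) (use b in simp_all)
  have e1: "SO G1 = (real n + 2) * sqrt 8 + 2*(sqrt 13 - sqrt 8) + 5*(sqrt 18 - sqrt 8)"
    using SO_gamma_k[OF assms(2)] by simp
  have e2: "SO G2 = (real n + 2) * sqrt 8 + 4*(sqrt 13 - sqrt 8) + 4*(sqrt 18 - sqrt 8)"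
    using SO_gamma_k[OF assms(3)] by simp
  have e3: "SO G3 = (real n + 2) * sqrt 8 + 6*(sqrt 13 - sqrt 8) + 3*(sqrt 18 - sqrt 8)"
    using SO_gamma_k[OF assms(4)] by simp
  have e4: "SO G4 = (real n + 2) * sqrt 8 + 8*(sqrt 13 - sqrt 8) + 2*(sqrt 18 - sqrt 8)"
    using SO_gamma_k[OF assms(5)] by simp
  have e5: "SO G5 = (real n + 2) * sqrt 8 + 10*(sqrt 13 - sqrt 8) + (sqrt 18 - sqrt 8)"
    using SO_gamma_k[OF assms(6)] by simp
  have e6: "SO G6 = (real n + 2) * sqrt 8 + 12*(sqrt 13 - sqrt 8)"
    using SO_gamma_k[OF assms(7)] by simp
  have e7: "SO G7 = (real n + 2) * sqrt 8 + (sqrt 5 - sqrt 8) + (sqrt 13 - sqrt 8) + 7*(sqrt 18 - sqrt 8)"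
    by (rule SO_gamma65[OF assms(8)])
  have e: "SO G > (real n + 2) * sqrt 8 + (sqrt 5 - sqrt 8) + (sqrt 13 - sqrt 8) + 7*(sqrt 18 - sqrt 8)"
    by (rule other[OF assms(1) assms(9) assms(10) assms(11)])
  show ?thesis by (rule final_abs[OF T U e1 e2 e3 e4 e5 e6 e7 e])
qed


end
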